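(* Let $G$ be a graph with no isolated vertex and let $H$ be a nontrivial graph. Then there exists a $\gamma_{(1,0)}^s(G\circ H)$-function $f$ such that $f(V(H_u))=\sum_{y\in V(H)}f(u,y)\le 2$ for every $u\in V(G)$.
   Context: All graphs are finite and simple; $N(v)$ denotes the open neighbourhood of a vertex $v$; a graph is nontrivial if it has at least two vertices. For an integer $l\ge 1$ and $w=(w_0,\dots,w_l)$ with $w_0\ge1$ and $w_i\ge 0$ integers, a function $f:V(G)\to\{0,\dots,l\}$, with $V_i=\{v: f(v)=i\}$, is a $w$-dominating function if $f(N(v))=\sum_{u\in N(v)}f(u)\ge w_i$ for every $v\in V_i$ and every $i$. Its weight is $\omega(f)=\sum_{v\in V(G)}f(v)$. For adjacent $v,u$ with $f(v)=0$, $f(u)>0$, the function $f_{u\to v}$ is defined by $f_{u\to v}(v)=1$, $f_{u\to v}(u)=f(u)-1$, and $f_{u\to v}(x)=f(x)$ otherwise. A $w$-dominating function $f$ is secure if for every $v$ with $f(v)=0$ there is $u\in N(v)$ with $f(u)>0$ such that $f_{u\to v}$ is also $w$-dominating. $\gamma_w^s(G)$ is the minimum weight of a secure $w$-dominating function, and a $\gamma_w^s(G)$-function is a secure $w$-dominating function of weight $\gamma_w^s(G)$. The lexicographic product $G\circ H$ has vertex set $V(G)\times V(H)$, with $(u,v)(x,y)$ an edge iff $ux\in E(G)$, or $u=x$ and $vy\in E(H)$. For $u\in V(G)$, $H_u$ is the subgraph of $G\circ H$ induced by $\{u\}\times V(H)$. *)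

theory Defs
  imports Main
begin

definition simple_graph :: "'a set \<Rightarrow> ('a \<Rightarrow> 'a \<Rightarrow> bool) \<Rightarrow> bool" where
  "simple_graph V E \<longleftrightarrow> finite V \<and> (\<forall>x y. E x y \<longrightarrow> x \<in> V \<and> y \<in> V)
     \<and> (\<forall>x y. E x y \<longrightarrow> E y x) \<and> (\<forall>x. \<not> E x x)"

definition nbhd :: "'a set \<Rightarrow> ('a \<Rightarrow> 'a \<Rightarrow> bool) \<Rightarrow> 'a \<Rightarrow> 'a set" where
  "nbhd V E v = {u \<in> V. E v u}"

definition no_isolated :: "'a set \<Rightarrow> ('a \<Rightarrow> 'a \<Rightarrow> bool) \<Rightarrow> bool" where
  "no_isolated V E \<longleftrightarrow> (\<forall>v \<in> V. nbhd V E v \<noteq> {})"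

definition nontrivial :: "'a set \<Rightarrow> bool" where
  "nontrivial V \<longleftrightarrow> card V \<ge> 2"

definition lex_V :: "'a set \<Rightarrow> 'b set \<Rightarrow> ('a \<times> 'b) set" where
  "lex_V VG VH = VG \<times> VH"

definition lex_E :: "('a \<Rightarrow> 'a \<Rightarrow> bool) \<Rightarrow> ('b \<Rightarrow> 'b \<Rightarrow> bool)
                     \<Rightarrow> ('a \<times> 'b) \<Rightarrow> ('a \<times> 'b) \<Rightarrow> bool" where
  "lex_E EG EH p q \<longleftrightarrow> EG (fst p) (fst q) \<or> (fst p = fst q \<and> EH (snd p) (snd q))"

text \<open>Weight vector w = (w_0,...,w_l) as a list of length l+1 (l = length w - 1).
  f(S) = sum of f over S.\<close>
definition fsum :: "('a \<Rightarrow> nat) \<Rightarrow> 'a set \<Rightarrow> nat" where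
  "fsum f S = (\<Sum>x\<in>S. f x)"

definition w_dom :: "nat list \<Rightarrow> 'a set \<Rightarrow> ('a \<Rightarrow> 'a \<Rightarrow> bool) \<Rightarrow> ('a \<Rightarrow> nat) \<Rightarrow> bool" where
  "w_dom w V E f \<longleftrightarrow> (\<forall>v\<in>V. f v \<le> length w - 1)
     \<and> (\<forall>v\<in>V. fsum f (nbhd V E v) \<ge> w ! (f v))
     \<and> (\<forall>v. v \<notin> V \<longrightarrow> f v = 0)"

definition move :: "('a \<Rightarrow> nat) \<Rightarrow> 'a \<Rightarrow> 'a \<Rightarrow> ('a \<Rightarrow> nat)" where
  "move f u v = (\<lambda>x. if x = v then 1 else if x = u then f u - 1 else f x)"

definition secure_w_dom :: "nat list \<Rightarrow> 'a set \<Rightarrow> ('a \<Rightarrow> 'a \<Rightarrow> bool) \<Rightarrow> ('a \<Rightarrow> nat) \<Rightarrow> bool" where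
  "secure_w_dom w V E f \<longleftrightarrow> w_dom w V E f \<and>
     (\<forall>v\<in>V. f v = 0 \<longrightarrow> (\<exists>u\<in>nbhd V E v. f u > 0 \<and> w_dom w V E (move f u v)))"

definition weight :: "'a set \<Rightarrow> ('a \<Rightarrow> nat) \<Rightarrow> nat" where
  "weight V f = (\<Sum>v\<in>V. f v)"

definition secure_w_dom_number :: "nat list \<Rightarrow> 'a set \<Rightarrow> ('a \<Rightarrow> 'a \<Rightarrow> bool) \<Rightarrow> nat" where
  "secure_w_dom_number w V E = (LEAST k. \<exists>f. secure_w_dom w V E f \<and> weight V f = k)"

definition is_gamma_ws_function :: "nat list \<Rightarrow> 'a set \<Rightarrow> ('a \<Rightarrow> 'a \<Rightarrow> bool) \<Rightarrow> ('a \<Rightarrow> nat) \<Rightarrow> bool" where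
  "is_gamma_ws_function w V E f \<longleftrightarrow> secure_w_dom w V E f \<and> weight V f = secure_w_dom_number w V E"

end

theory Submission
  imports Defs
begin

definition isdom :: "'a set \<Rightarrow> ('a \<Rightarrow> 'a \<Rightarrow> bool) \<Rightarrow> 'a set \<Rightarrow> bool" where
  "isdom V E S \<longleftrightarrow> S \<subseteq> V \<and> (\<forall>v\<in>V - S. \<exists>u\<in>S. E v u)"
definition secdom :: "'a set \<Rightarrow> ('a \<Rightarrow> 'a \<Rightarrow> bool) \<Rightarrow> 'a set \<Rightarrow> bool" where
  "secdom V E S \<longleftrightarrow> isdom V E S \<and> (\<forall>v\<in>V - S. \<exists>u\<in>S. E v u \<and> isdom V E (insert v (S - {u})))"
definition chi :: "'a set \<Rightarrow> 'a \<Rightarrow> nat" where "chi S = (\<lambda>x. if x \<in> S then 1 else 0)"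

lemma sum_chi: "finite V \<Longrightarrow> (\<Sum>x\<in>V. chi S x) = card (V \<inter> S)"
  unfolding chi_def by (simp add: sum.If_cases Int_def)

lemma wdom_chi:
  assumes "finite V" "T \<subseteq> V"
  shows "w_dom [1,0] V E (chi T) \<longleftrightarrow> isdom V E T"
proof -
  have fs: "fsum (chi T) (nbhd V E v) = card (nbhd V E v \<inter> T)" for v
    unfolding fsum_def by (rule sum_chi) (use assms in \<open>auto simp: nbhd_def\<close>)
  have fin: "finite (nbhd V E v \<inter> T)" for v using assms by (auto simp: nbhd_def)
  show ?thesis
  proof
    assume w: "w_dom [1,0] V E (chi T)"
    show "isdom V E T" unfolding isdom_def
    proof (intro conjI ballI)
      fix v assume v: "v \<in> V - T"
      then have "1 \<le> card (nbhd V E v \<inter> T)" using w fs[of v] by (auto simp: w_dom_def chi_def)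
      then have "nbhd V E v \<inter> T \<noteq> {}" by auto
      then show "\<exists>u\<in>T. E v u" by (auto simp: nbhd_def)
    qed (use assms in auto)
  next
    assume d: "isdom V E T"
    show "w_dom [1,0] V E (chi T)" unfolding w_dom_def
    proof (intro conjI ballI allI impI)
      fix v assume v: "v \<in> V"
      show "[1,0] ! chi T v \<le> fsum (chi T) (nbhd V E v)"
      proof (cases "v \<in> T")
        case False
        then obtain u where "u \<in> T" "E v u" using d v by (auto simp: isdom_def)
        then have "u \<in> nbhd V E v \<inter> T" using assms by (auto simp: nbhd_def)
        then have "nbhd V E v \<inter> T \<noteq> {}" by blast
        then have "card (nbhd V E v \<inter> T) \<noteq> 0" using fin[of v] by simp
        then have "card (nbhd V E v \<inter> T) \<ge> 1" by linarith
        then show ?thesis using False fs[of v] by (simp add: chi_def)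
      qed (simp add: chi_def)
    qed (use assms in \<open>auto simp: chi_def\<close>)
  qed
qed

lemma move_chi: "u \<in> S \<Longrightarrow> v \<notin> S \<Longrightarrow> move (chi S) u v = chi (insert v (S - {u}))"
  unfolding move_def chi_def by (rule ext) auto

lemma secdom_to:
  assumes "finite V" "secdom V E S"
  shows "secure_w_dom [1,0] V E (chi S)"
proof -
  have SV: "S \<subseteq> V" using assms by (auto simp: secdom_def isdom_def)
  show ?thesis unfolding secure_w_dom_def
  proof (intro conjI ballI impI)
    show "w_dom [1,0] V E (chi S)" using wdom_chi[OF assms(1) SV] assms(2) by (simp add: secdom_def)
    fix v assume v: "v \<in> V" "chi S v = 0"
    then have "v \<in> V - S" by (auto simp: chi_def split: if_splits)
    then obtain u where u: "u \<in> S" "E v u" "isdom V E (insert v (S - {u}))"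
      using assms(2) by (auto simp: secdom_def)
    have "insert v (S - {u}) \<subseteq> V" using SV v by auto
    then have "w_dom [1,0] V E (move (chi S) u v)"
      using move_chi[OF u(1)] \<open>v \<in> V - S\<close> wdom_chi[OF assms(1)] u(3) by auto
    moreover have "u \<in> nbhd V E v" using u SV by (auto simp: nbhd_def)
    ultimately show "\<exists>u\<in>nbhd V E v. 0 < chi S u \<and> w_dom [1, 0] V E (move (chi S) u v)"
      using u(1) by (auto simp: chi_def)
  qed
qed

lemma to_secdom:
  assumes "finite V" "secure_w_dom [1,0] V E f"
  shows "f = chi {x\<in>V. f x = 1} \<and> secdom V E {x\<in>V. f x = 1}"
proof -
  define S where "S = {x\<in>V. f x = 1}"
  have w: "w_dom [1,0] V E f" using assms by (simp add: secure_w_dom_def)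
  have fS: "f = chi S"
  proof
    fix x show "f x = chi S x"
    proof (cases "x \<in> V")
      case True
      then have "f x \<le> 1" using w by (auto simp: w_dom_def)
      then show ?thesis using True by (auto simp: chi_def S_def)
    next
      case False
      then show ?thesis using w by (auto simp: w_dom_def chi_def S_def)
    qed
  qed
  have SV: "S \<subseteq> V" by (auto simp: S_def)
  have d: "isdom V E S" using wdom_chi[OF assms(1) SV] w fS by simp
  have "secdom V E S" unfolding secdom_def
  proof (intro conjI ballI d)
    fix v assume v: "v \<in> V - S"
    then have "f v = 0" using fS by (auto simp: chi_def)
    then obtain u where u: "u \<in> nbhd V E v" "0 < f u" "w_dom [1,0] V E (move f u v)"
      using assms(2) v by (auto simp: secure_w_dom_def)
    have uS: "u \<in> S" using u fS by (auto simp: chi_def split: if_splits)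
    have "insert v (S - {u}) \<subseteq> V" using SV v by auto
    then have "isdom V E (insert v (S - {u}))"
      using u(3) move_chi[OF uS, of v] v fS wdom_chi[OF assms(1)] by auto
    then show "\<exists>u\<in>S. E v u \<and> isdom V E (insert v (S - {u}))"
      using uS u(1) by (auto simp: nbhd_def)
  qed
  then show ?thesis unfolding S_def[symmetric] using fS by blast
qed

definition fib :: "('a \<times> 'b) set \<Rightarrow> 'a \<Rightarrow> 'b set" where "fib S x = {y. (x,y) \<in> S}"
definition bad :: "'a set \<Rightarrow> ('a \<times> 'b) set \<Rightarrow> nat" where
  "bad VG S = card {x\<in>VG. 3 \<le> card (fib S x)}"

lemma two_elems:
  assumes "2 \<le> card A" obtains a b where "a \<in> A" "b \<in> A" "a \<noteq> b"
proof -
  have "finite A"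
  proof (rule ccontr)
    assume "infinite A" then have "card A = 0" by simp
    with assms show False by simp
  qed
  moreover have "\<not> card A \<le> Suc 0" using assms by simp
  ultimately show ?thesis using that card_le_Suc0_iff_eq by blast
qed

locale LP =
  fixes VG :: "'a set" and EG :: "'a \<Rightarrow> 'a \<Rightarrow> bool"
    and VH :: "'b set" and EH :: "'b \<Rightarrow> 'b \<Rightarrow> bool"
  assumes G: "simple_graph VG EG" and H: "simple_graph VH EH"
begin

abbreviation "LV \<equiv> VG \<times> VH"
abbreviation "LE \<equiv> lex_E EG EH"

lemma finG: "finite VG" using G unfolding simple_graph_def by blast
lemma finH: "finite VH" using H unfolding simple_graph_def by blast
lemma EG_in: "EG x y \<Longrightarrow> x \<in> VG \<and> y \<in> VG" using G unfolding simple_graph_def by blast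
lemma EG_sym: "EG x y \<Longrightarrow> EG y x" using G unfolding simple_graph_def by blast
lemma EG_irr: "\<not> EG x x" using G unfolding simple_graph_def by blast

lemma finLV: "finite LV" using finG finH by simp

lemma lexE: "LE (x,y) (x',y') \<longleftrightarrow> EG x x' \<or> (x = x' \<and> EH y y')"
  by (simp add: lex_E_def)

lemma fib_sub: "S \<subseteq> LV \<Longrightarrow> fib S x \<subseteq> VH" by (auto simp: fib_def)
lemma fib_fin: "S \<subseteq> LV \<Longrightarrow> finite (fib S x)" by (rule finite_subset[OF fib_sub finH])

lemma mono_dom:
  assumes R: "isdom LV LE R" and T: "T \<subseteq> LV" and uv: "EG u v"
    and Tu: "fib T u \<noteq> {}" and Tv: "fib T v \<noteq> {}"
    and out: "\<And>x y. x \<noteq> u \<Longrightarrow> x \<noteq> v \<Longrightarrow> (x,y) \<in> R \<Longrightarrow> (x,y) \<in> T"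
  shows "isdom LV LE T"
proof -
  have vu: "EG v u" using uv EG_sym by blast
  obtain a where a: "(u,a) \<in> T" using Tu unfolding fib_def by blast
  obtain b where b: "(v,b) \<in> T" using Tv unfolding fib_def by blast
  have toU: "\<exists>q\<in>T. LE (x,y) q" if "EG x u" for x y
    using a that lexE by blast
  have toV: "\<exists>q\<in>T. LE (x,y) q" if "EG x v" for x y
    using b that lexE by blast
  have main: "\<exists>q\<in>T. LE (x,y) q" if p: "(x,y) \<in> LV - T" for x y
  proof (cases "x = u")
    case True then show ?thesis using toV uv by blast
  next
    case xu: False
    show ?thesis
    proof (cases "x = v")
      case True then show ?thesis using toU vu by blast
    next
      case xv: False
      have "(x,y) \<notin> R" using out[OF xu xv] p by blast
      then have "(x,y) \<in> LV - R" using p by blast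
      then obtain q where q: "q \<in> R" "LE (x,y) q" using R unfolding isdom_def by blast
      obtain x' y' where qq: "q = (x',y')" by (cases q)
      have qe: "EG x x' \<or> (x = x' \<and> EH y y')" using q(2) qq lexE by simp
      show ?thesis
      proof (cases "x' = u")
        case True
        then have "EG x u" using qe xu by blast
        then show ?thesis by (rule toU)
      next
        case x'u: False
        show ?thesis
        proof (cases "x' = v")
          case True
          then have "EG x v" using qe xv by blast
          then show ?thesis by (rule toV)
        next
          case False
          then have "q \<in> T" using out[OF x'u False] q(1) qq by blast
          then show ?thesis using q(2) by blast
        qed
      qed
    qed
  qed
  show ?thesis unfolding isdom_def
  proof (intro conjI T ballI)
    fix p assume "p \<in> LV - T"
    then show "\<exists>q\<in>T. LE p q" using main by (cases p) blast
  qed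
qed

lemma defend_out:
  assumes S: "secdom LV LE S" and S'V: "S' \<subseteq> LV" and uv: "EG u v"
    and agree: "\<And>x y. x \<noteq> u \<Longrightarrow> x \<noteq> v \<Longrightarrow> (x,y) \<in> S \<longleftrightarrow> (x,y) \<in> S'"
    and cu: "2 \<le> card (fib S' u)" and cv: "fib S v = {} \<or> 2 \<le> card (fib S' v)"
    and nv: "fib S' v \<noteq> {}"
    and p: "(x,y) \<in> LV - S'" and xu: "x \<noteq> u" and xv: "x \<noteq> v"
  shows "\<exists>q\<in>S'. LE (x,y) q \<and> isdom LV LE (insert (x,y) (S' - {q}))"
proof -
  have Sd: "isdom LV LE S" using S by (simp add: secdom_def)
  have insV: "insert (x,y) (S' - {q}) \<subseteq> LV" for q using S'V p by auto
  have unv: "u \<noteq> v" using uv EG_irr by blast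
  obtain a0 b0 where ab0: "a0 \<in> fib S' u" "b0 \<in> fib S' u" "a0 \<noteq> b0" using two_elems[OF cu] by blast
  obtain c0 where c0: "c0 \<in> fib S' v" using nv by blast
  show ?thesis
  proof (cases "EG x u")
    case True
    let ?T = "insert (x,y) (S' - {(u,a0)})"
    have "isdom LV LE ?T"
    proof (rule mono_dom[OF Sd insV uv])
      show "fib ?T u \<noteq> {}" using ab0 by (auto simp: fib_def)
      show "fib ?T v \<noteq> {}" using c0 unv by (auto simp: fib_def)
      show "(x',y') \<in> ?T" if "x' \<noteq> u" "x' \<noteq> v" "(x',y') \<in> S" for x' y'
        using that agree by auto
    qed
    moreover have "(u,a0) \<in> S'" using ab0 by (auto simp: fib_def)
    ultimately show ?thesis using True by (intro bexI[of _ "(u,a0)"]) (auto simp: lexE)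
  next
    case False
    have "(x,y) \<in> LV - S" using p agree[OF xu xv] by blast
    then obtain q where q: "q \<in> S" "LE (x,y) q" "isdom LV LE (insert (x,y) (S - {q}))"
      using S unfolding secdom_def by blast
    obtain x' y' where qq: "q = (x',y')" by (cases q)
    have x'u: "x' \<noteq> u" using q(2) qq False xu by (auto simp: lexE)
    show ?thesis
    proof (cases "x' = v")
      case True
      then have "EG x v" using q qq xv by (auto simp: lexE)
      have "fib S v \<noteq> {}" using q qq True by (auto simp: fib_def)
      then have "2 \<le> card (fib S' v)" using cv by blast
      then obtain a b where ab: "a \<in> fib S' v" "b \<in> fib S' v" "a \<noteq> b" using two_elems by blast
      let ?T = "insert (x,y) (S' - {(v,a)})"
      have "isdom LV LE ?T"
      proof (rule mono_dom[OF Sd insV uv])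
        show "fib ?T u \<noteq> {}" using ab0 unv by (auto simp: fib_def)
        show "fib ?T v \<noteq> {}" using ab by (auto simp: fib_def)
        show "(x',y') \<in> ?T" if "x' \<noteq> u" "x' \<noteq> v" "(x',y') \<in> S" for x' y'
          using that agree by auto
      qed
      moreover have "(v,a) \<in> S'" using ab by (auto simp: fib_def)
      ultimately show ?thesis using \<open>EG x v\<close> by (intro bexI[of _ "(v,a)"]) (auto simp: lexE)
    next
      case x'v: False
      have qS': "q \<in> S'" using agree[OF x'u x'v] q qq by blast
      let ?T = "insert (x,y) (S' - {q})"
      have "isdom LV LE ?T"
      proof (rule mono_dom[OF q(3) insV uv])
        show "fib ?T u \<noteq> {}" using ab0 qq x'u by (auto simp: fib_def)
        show "fib ?T v \<noteq> {}" using c0 qq x'v by (auto simp: fib_def)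
        show "(x'',y'') \<in> ?T" if "x'' \<noteq> u" "x'' \<noteq> v" "(x'',y'') \<in> insert (x,y) (S - {q})" for x'' y''
          using that agree by auto
      qed
      then show ?thesis using qS' q(2) by blast
    qed
  qed
qed

lemma bad_less:
  assumes u: "u \<in> VG" and su: "3 \<le> card (fib S u)" and s'u: "card (fib S' u) \<le> 2"
    and s'v: "card (fib S' v) \<le> 2"
    and oth: "\<And>x. x \<noteq> u \<Longrightarrow> x \<noteq> v \<Longrightarrow> fib S' x = fib S x"
  shows "bad VG S' < bad VG S"
proof -
  let ?A = "{x \<in> VG. 3 \<le> card (fib S' x)}"
  let ?B = "{x \<in> VG. 3 \<le> card (fib S x)}"
  have sub: "?A \<subseteq> ?B"
  proof
    fix x assume x: "x \<in> ?A"
    then have c: "3 \<le> card (fib S' x)" and xV: "x \<in> VG" by auto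
    have "x \<noteq> u" using c s'u by (metis not_less_eq_eq numeral_3_eq_3 numeral_2_eq_2)
    moreover have "x \<noteq> v" using c s'v by (metis not_less_eq_eq numeral_3_eq_3 numeral_2_eq_2)
    ultimately have "fib S' x = fib S x" by (rule oth)
    then show "x \<in> ?B" using c xV by simp
  qed
  have "u \<in> ?B" using u su by simp
  moreover have "u \<notin> ?A" using s'u by simp
  ultimately have "?A \<subset> ?B" using sub by blast
  moreover have "finite ?B" using finG by simp
  ultimately show ?thesis unfolding bad_def by (simp add: psubset_card_mono)
qed

lemma card_split:
  assumes "S \<subseteq> LV" "u \<noteq> v"
  shows "card S = card {p\<in>S. fst p \<noteq> u \<and> fst p \<noteq> v} + card (fib S u) + card (fib S v)"
proof -
  have fS: "finite S" using assms finLV finite_subset by blast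
  have eq: "S = {p\<in>S. fst p \<noteq> u \<and> fst p \<noteq> v} \<union> (({u} \<times> fib S u) \<union> ({v} \<times> fib S v))"
    by (auto simp: fib_def)
  have f1: "finite ({u} \<times> fib S u)" "finite ({v} \<times> fib S v)" using fib_fin[OF assms(1)] by auto
  have "card S = card {p\<in>S. fst p \<noteq> u \<and> fst p \<noteq> v} + card (({u} \<times> fib S u) \<union> ({v} \<times> fib S v))"
    by (subst eq, rule card_Un_disjoint) (use fS f1 in auto)
  also have "card (({u} \<times> fib S u) \<union> ({v} \<times> fib S v)) = card (fib S u) + card (fib S v)"
    by (subst card_Un_disjoint) (use f1 assms(2) in \<open>auto simp: card_cartesian_product_singleton\<close>)
  finally show ?thesis by simp
qed

lemma caseA:
  assumes S: "secdom LV LE S" and u: "u \<in> VG" and uv: "EG u v"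
    and k: "4 \<le> card (fib S u) + card (fib S v)" and ku: "3 \<le> card (fib S u)"
    and ab: "a \<in> VH" "b \<in> VH" "a \<noteq> b"
  shows "\<exists>S'. secdom LV LE S' \<and> card S' \<le> card S \<and> bad VG S' < bad VG S"
proof -
  define S0 where "S0 = {p\<in>S. fst p \<noteq> u \<and> fst p \<noteq> v}"
  define S' where "S' = S0 \<union> ({u,v} \<times> {a,b})"
  have unv: "u \<noteq> v" using uv EG_irr by blast
  have vG: "v \<in> VG" using uv EG_in by blast
  have vu: "EG v u" using uv EG_sym by blast
  have Sd: "isdom LV LE S" using S by (simp add: secdom_def)
  have SV: "S \<subseteq> LV" using Sd by (simp add: isdom_def)
  have S'V: "S' \<subseteq> LV" using SV u vG ab by (auto simp: S'_def S0_def)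
  have agree: "(x,y) \<in> S \<longleftrightarrow> (x,y) \<in> S'" if "x \<noteq> u" "x \<noteq> v" for x y
    using that by (auto simp: S'_def S0_def)
  have fu: "fib S' u = {a,b}" and fv: "fib S' v = {a,b}" using unv by (auto simp: S'_def S0_def fib_def)
  have fo: "fib S' x = fib S x" if "x \<noteq> u" "x \<noteq> v" for x using agree that by (auto simp: fib_def)
  have dS': "isdom LV LE S'"
  proof (rule mono_dom[OF Sd S'V uv])
    show "fib S' u \<noteq> {}" "fib S' v \<noteq> {}" using fu fv by auto
    show "(x,y) \<in> S'" if "x \<noteq> u" "x \<noteq> v" "(x,y) \<in> S" for x y using agree that by blast
  qed
  have "secdom LV LE S'" unfolding secdom_def
  proof (intro conjI ballI dS')
    fix p assume p: "p \<in> LV - S'"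
    obtain x y where pxy: "p = (x,y)" by (cases p)
    show "\<exists>q\<in>S'. LE p q \<and> isdom LV LE (insert p (S' - {q}))"
    proof (cases "x = u")
      case True
      let ?T = "insert p (S' - {(v,a)})"
      have "isdom LV LE ?T"
      proof (rule mono_dom[OF Sd _ uv])
        show "?T \<subseteq> LV" using p S'V by auto
        show "fib ?T u \<noteq> {}" using fu unv by (auto simp: fib_def)
        show "fib ?T v \<noteq> {}" using fv ab by (auto simp: fib_def)
        show "(x',y') \<in> ?T" if "x' \<noteq> u" "x' \<noteq> v" "(x',y') \<in> S" for x' y'
          using that agree by auto
      qed
      moreover have "(v,a) \<in> S'" by (simp add: S'_def)
      ultimately show ?thesis using True pxy uv by (intro bexI[of _ "(v,a)"]) (auto simp: lexE)
    next
      case xu: False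
      show ?thesis
      proof (cases "x = v")
        case True
        let ?T = "insert p (S' - {(u,a)})"
        have "isdom LV LE ?T"
        proof (rule mono_dom[OF Sd _ uv])
          show "?T \<subseteq> LV" using p S'V by auto
          show "fib ?T u \<noteq> {}" using fu ab by (auto simp: fib_def)
          show "fib ?T v \<noteq> {}" using fv unv by (auto simp: fib_def)
          show "(x',y') \<in> ?T" if "x' \<noteq> u" "x' \<noteq> v" "(x',y') \<in> S" for x' y'
            using that agree by auto
        qed
        moreover have "(u,a) \<in> S'" by (simp add: S'_def)
        ultimately show ?thesis using True pxy vu by (intro bexI[of _ "(u,a)"]) (auto simp: lexE)
      next
        case False
        have "2 \<le> card (fib S' u)" "2 \<le> card (fib S' v)" "fib S' v \<noteq> {}" using fu fv ab by auto
        then show ?thesis using defend_out[OF S S'V uv agree, of x y] p pxy xu False by blast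
      qed
    qed
  qed
  moreover have "card S' \<le> card S"
  proof -
    have "card S' \<le> card S0 + card ({u,v} \<times> {a,b})" unfolding S'_def by (rule card_Un_le)
    also have "card ({u,v} \<times> {a,b}) = 4" using unv ab by (simp add: card_cartesian_product)
    also have "card S = card S0 + card (fib S u) + card (fib S v)"
      using card_split[OF SV unv] by (simp add: S0_def)
    ultimately show ?thesis using k by linarith
  qed
  moreover have "bad VG S' < bad VG S"
    by (rule bad_less[OF u ku]) (use fu fv fo ab in auto)
  ultimately show ?thesis by blast
qed

lemma caseB:
  assumes S: "secdom LV LE S" and u: "u \<in> VG" and uv: "EG u v"
    and k3: "card (fib S u) = 3" and emp: "\<And>w. EG u w \<Longrightarrow> fib S w = {}" and c: "c \<in> VH"
  shows "\<exists>S'. secdom LV LE S' \<and> card S' \<le> card S \<and> bad VG S' < bad VG S"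
proof -
  obtain a b e where abe: "fib S u = {a,b,e}" "a \<noteq> b" "b \<noteq> e" "a \<noteq> e"
    using k3 card_3_iff by metis
  have mem: "(u,y) \<in> S \<longleftrightarrow> y = a \<or> y = b \<or> y = e" for y
  proof -
    have "(u,y) \<in> S \<longleftrightarrow> y \<in> fib S u" by (simp add: fib_def)
    then show ?thesis using abe(1) by simp
  qed
  have unv: "u \<noteq> v" using uv EG_irr by blast
  have vG: "v \<in> VG" using uv EG_in by blast
  have vu: "EG v u" using uv EG_sym by blast
  have Sd: "isdom LV LE S" using S by (simp add: secdom_def)
  have SV: "S \<subseteq> LV" using Sd by (simp add: isdom_def)
  have fvS: "fib S v = {}" using emp uv by blast
  have vcS: "(v,c) \<notin> S" using fvS by (auto simp: fib_def)
  define S' where "S' = insert (v,c) (S - {(u,e)})"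
  have S'V: "S' \<subseteq> LV" using SV vG c by (auto simp: S'_def)
  have agree: "(x,y) \<in> S \<longleftrightarrow> (x,y) \<in> S'" if "x \<noteq> u" "x \<noteq> v" for x y
    using that by (auto simp: S'_def)
  have fu: "fib S' u = {a,b}"
  proof -
    have "(u,y) \<in> S' \<longleftrightarrow> y = a \<or> y = b" for y
      using mem[of y] unv abe by (auto simp: S'_def)
    then show ?thesis by (auto simp: fib_def)
  qed
  have fv: "fib S' v = {c}"
  proof -
    have "(v,y) \<in> S' \<longleftrightarrow> y = c" for y
      using fvS unv by (auto simp: S'_def fib_def)
    then show ?thesis by (auto simp: fib_def)
  qed
  have fo: "fib S' x = fib S x" if "x \<noteq> u" "x \<noteq> v" for x
    using agree[OF that] unfolding fib_def by blast
  have ua: "(u,a) \<in> S'" "(u,b) \<in> S'" "(v,c) \<in> S'" using fu fv unfolding fib_def by auto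
  have dS': "isdom LV LE S'"
  proof (rule mono_dom[OF Sd S'V uv])
    show "fib S' u \<noteq> {}" "fib S' v \<noteq> {}" using fu fv by auto
    show "(x,y) \<in> S'" if "x \<noteq> u" "x \<noteq> v" "(x,y) \<in> S" for x y using agree that by blast
  qed
  have swapU: "isdom LV LE (insert p (S' - {(u,z)}))" if "p \<in> LV" "fst p \<noteq> u" "z \<in> {a,b}" for p z
  proof (rule mono_dom[OF Sd _ uv])
    show "insert p (S' - {(u,z)}) \<subseteq> LV" using that S'V by auto
    show "fib (insert p (S' - {(u,z)})) u \<noteq> {}" using that ua abe unfolding fib_def by auto
    show "fib (insert p (S' - {(u,z)})) v \<noteq> {}" using ua unv unfolding fib_def by auto
    show "(x,y) \<in> insert p (S' - {(u,z)})" if "x \<noteq> u" "x \<noteq> v" "(x,y) \<in> S" for x y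
      using agree that by blast
  qed
  have "secdom LV LE S'" unfolding secdom_def
  proof (intro conjI ballI dS')
    fix p assume p: "p \<in> LV - S'"
    obtain x y where pxy: "p = (x,y)" by (cases p)
    show "\<exists>q\<in>S'. LE p q \<and> isdom LV LE (insert p (S' - {q}))"
    proof (cases "x = u")
      case True
      have ya: "y \<noteq> a" "y \<noteq> b" using p pxy True ua by auto
      show ?thesis
      proof (cases "EH y a \<or> EH y b")
        case True
        then obtain z where z: "z \<in> {a,b}" "EH y z" by blast
        have "isdom LV LE (insert (u,y) (S' - {(u,z)}))"
        proof (rule mono_dom[OF Sd _ uv])
          show "insert (u,y) (S' - {(u,z)}) \<subseteq> LV" using p pxy \<open>x = u\<close> S'V by auto
          show "fib (insert (u,y) (S' - {(u,z)})) u \<noteq> {}" unfolding fib_def by auto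
          show "fib (insert (u,y) (S' - {(u,z)})) v \<noteq> {}" using ua unv unfolding fib_def by auto
          show "(x',y') \<in> insert (u,y) (S' - {(u,z)})" if "x' \<noteq> u" "x' \<noteq> v" "(x',y') \<in> S" for x' y'
            using agree that by blast
        qed
        moreover have "(u,z) \<in> S'" using z ua by auto
        moreover have "LE (u,y) (u,z)" using z lexE by simp
        ultimately show ?thesis using pxy \<open>x = u\<close> by blast
      next
        case False
        have T: "insert (u,y) (S' - {(v,c)}) = insert (u,y) (S - {(u,e)})"
          using vcS unv by (auto simp: S'_def)
        have "isdom LV LE (insert (u,y) (S - {(u,e)}))"
        proof (cases "y = e")
          case True
          have "insert (u,y) (S - {(u,e)}) = S" using True mem by auto
          then show ?thesis using Sd by simp
        next
          case False
          have "(u,y) \<notin> S" using mem False ya by blast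
          then have "(u,y) \<in> LV - S" using p pxy \<open>x = u\<close> by auto
          then obtain q where q: "q \<in> S" "LE (u,y) q" "isdom LV LE (insert (u,y) (S - {q}))"
            using S unfolding secdom_def by blast
          obtain x' y' where qq: "q = (x',y')" by (cases q)
          have "\<not> EG u x'"
          proof
            assume "EG u x'"
            then have "fib S x' = {}" by (rule emp)
            then show False using q(1) qq unfolding fib_def by auto
          qed
          then have "x' = u" "EH y y'" using q(2) qq lexE by auto
          then have "y' = e" using q(1) qq mem \<open>\<not> (EH y a \<or> EH y b)\<close> by auto
          then show ?thesis using q(3) qq \<open>x' = u\<close> by simp
        qed
        moreover have "LE (u,y) (v,c)" using uv lexE by simp
        ultimately show ?thesis using T ua pxy \<open>x = u\<close> by metis
      qed
    next
      case xu: False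
      show ?thesis
      proof (cases "x = v")
        case True
        have "isdom LV LE (insert p (S' - {(u,a)}))"
          by (rule swapU) (use p pxy xu in auto)
        moreover have "LE p (u,a)" using vu True pxy lexE by simp
        ultimately show ?thesis using ua by blast
      next
        case False
        have "2 \<le> card (fib S' u)" "fib S' v \<noteq> {}" using fu fv abe by auto
        then show ?thesis using defend_out[OF S S'V uv agree, of x y] fvS p pxy xu False by blast
      qed
    qed
  qed
  moreover have "card S' \<le> card S"
  proof -
    have fS: "finite S" by (rule finite_subset[OF SV finLV])
    have "(u,e) \<in> S" using mem by simp
    then have "card (S - {(u,e)}) = card S - 1" by (simp add: fS)
    moreover have "card S \<noteq> 0" using fS \<open>(u,e) \<in> S\<close> by auto
    moreover have "card S' = Suc (card (S - {(u,e)}))" unfolding S'_def using fS vcS by simp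
    ultimately show ?thesis by linarith
  qed
  moreover have "bad VG S' < bad VG S"
    by (rule bad_less[OF u]) (use fu fv fo abe k3 in auto)
  ultimately show ?thesis by blast
qed

lemma improve:
  assumes S: "secdom LV LE S" and u: "u \<in> VG" and ku: "3 \<le> card (fib S u)"
    and noiso: "no_isolated VG EG" and H2: "2 \<le> card VH"
  shows "\<exists>S'. secdom LV LE S' \<and> card S' \<le> card S \<and> bad VG S' < bad VG S"
proof -
  obtain a b where ab: "a \<in> VH" "b \<in> VH" "a \<noteq> b" using two_elems[OF H2] by blast
  obtain v0 where v0: "EG u v0" using noiso u unfolding no_isolated_def nbhd_def by blast
  have SV: "S \<subseteq> LV" using S by (simp add: secdom_def isdom_def)
  show ?thesis
  proof (cases "\<exists>w. EG u w \<and> 4 \<le> card (fib S u) + card (fib S w)")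
    case True
    then obtain w where "EG u w" "4 \<le> card (fib S u) + card (fib S w)" by blast
    then show ?thesis using caseA[OF S u _ _ ku ab] by blast
  next
    case False
    have emp: "fib S w = {}" if "EG u w" for w
    proof -
      have "card (fib S w) = 0" using False that ku by fastforce
      then show ?thesis using fib_fin[OF SV] by simp
    qed
    have "card (fib S u) = 3" using False v0 ku by fastforce
    then show ?thesis using caseB[OF S u v0 _ emp ab(1)] by blast
  qed
qed

lemma main:
  assumes noiso: "no_isolated VG EG" and H2: "2 \<le> card VH"
  shows "\<exists>f. is_gamma_ws_function [1, 0] LV LE f \<and> (\<forall>u\<in>VG. (\<Sum>y\<in>VH. f (u, y)) \<le> 2)"
proof -
  define m where "m = secure_w_dom_number [1,0] LV LE"
  have wchi: "weight LV (chi S) = card S" if "S \<subseteq> LV" for S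
  proof -
    have "weight LV (chi S) = card (LV \<inter> S)" unfolding weight_def by (rule sum_chi[OF finLV])
    also have "LV \<inter> S = S" using that by blast
    finally show ?thesis .
  qed
  have lb: "m \<le> card S" if "secdom LV LE S" for S
  proof -
    have SV: "S \<subseteq> LV" using that by (simp add: secdom_def isdom_def)
    have "secure_w_dom [1,0] LV LE (chi S) \<and> weight LV (chi S) = card S"
      using secdom_to[OF finLV that] wchi[OF SV] by blast
    then show ?thesis unfolding m_def secure_w_dom_number_def by (intro Least_le) blast
  qed
  have "secdom LV LE LV" unfolding secdom_def isdom_def by blast
  then have "\<exists>f. secure_w_dom [1,0] LV LE f \<and> weight LV f = card LV"
    using secdom_to[OF finLV] wchi by blast
  then have "\<exists>k. \<exists>f. secure_w_dom [1,0] LV LE f \<and> weight LV f = k" by blast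
  then have "\<exists>f. secure_w_dom [1,0] LV LE f \<and> weight LV f = m"
    unfolding m_def secure_w_dom_number_def by (rule LeastI_ex)
  then obtain f where f: "secure_w_dom [1,0] LV LE f" "weight LV f = m" by blast
  define S0 where "S0 = {x\<in>LV. f x = 1}"
  have S0c: "f = chi S0 \<and> secdom LV LE S0" using to_secdom[OF finLV f(1)] unfolding S0_def .
  have S0: "f = chi S0" "secdom LV LE S0" using S0c by blast+
  have S0sub: "S0 \<subseteq> LV" unfolding S0_def by blast
  have "card S0 = m" using f(2) wchi[OF S0sub] unfolding S0(1)[symmetric] by simp
  then have "secdom LV LE S0 \<and> card S0 = m" using S0 by blast
  from ex_has_least_nat[where P = "\<lambda>S. secdom LV LE S \<and> card S = m" and m = "bad VG", OF this]
  obtain S where S: "secdom LV LE S" "card S = m"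
    and minS: "\<And>S'. secdom LV LE S' \<and> card S' = m \<Longrightarrow> bad VG S \<le> bad VG S'" by blast
  have SV: "S \<subseteq> LV" using S by (simp add: secdom_def isdom_def)
  have small: "card (fib S u) \<le> 2" if u: "u \<in> VG" for u
  proof (rule ccontr)
    assume "\<not> card (fib S u) \<le> 2"
    then have "3 \<le> card (fib S u)" by simp
    then obtain S' where S': "secdom LV LE S'" "card S' \<le> card S" "bad VG S' < bad VG S"
      using improve[OF S(1) u _ noiso H2] by blast
    have "m \<le> card S'" using lb[OF S'(1)] .
    then have "card S' = m" using S'(2) S(2) by simp
    then have "bad VG S \<le> bad VG S'" using minS S'(1) by blast
    then show False using S'(3) by simp
  qed
  have fsum: "(\<Sum>y\<in>VH. chi S (u, y)) = card (fib S u)" for u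
  proof -
    have "(\<Sum>y\<in>VH. chi S (u, y)) = (\<Sum>y\<in>VH. chi (fib S u) y)" by (simp add: chi_def fib_def)
    also have "\<dots> = card (VH \<inter> fib S u)" by (rule sum_chi[OF finH])
    also have "VH \<inter> fib S u = fib S u" using fib_sub[OF SV] by blast
    finally show ?thesis .
  qed
  have "is_gamma_ws_function [1, 0] LV LE (chi S)"
    unfolding is_gamma_ws_function_def
    using secdom_to[OF finLV S(1)] wchi[OF SV] S(2) m_def by simp
  then show ?thesis using small fsum by (intro exI[of _ "chi S"]) simp
qed

end

theorem lemma5:
  fixes VG :: "'a set" and EG :: "'a \<Rightarrow> 'a \<Rightarrow> bool"
    and VH :: "'b set" and EH :: "'b \<Rightarrow> 'b \<Rightarrow> bool"
  assumes "simple_graph VG EG" and "no_isolated VG EG"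
    and "simple_graph VH EH" and "nontrivial VH"
  shows "\<exists>f. is_gamma_ws_function [1, 0] (lex_V VG VH) (lex_E EG EH) f
            \<and> (\<forall>u\<in>VG. (\<Sum>y\<in>VH. f (u, y)) \<le> 2)"
proof -
  interpret LP VG EG VH EH by unfold_locales (rule assms)+
  show ?thesis unfolding lex_V_def
    using main[OF assms(2)] assms(4) unfolding nontrivial_def by blast
qed

end
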